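(* For every $n \ge 1$, $$ f^+_n(x) = \big(2(n-1)x - 1\big) f^+_{n-1}(x) + 2x(1-x) \frac{d f^+_{n-1}}{dx}(x) + 2(n-1)x\, f^+_{n-2}(x) + d^B_{n-1}(x), $$ with the convention $f^+_{-1}(x) = 0$.
   Context: A signed permutation of $[n]$ is a set $S = \{a_1, \dots, a_n\}$ with $a_i \in \{i, -i\}$, together with a bijection $w : S \to S$. - $a \in S$ is a $B$-excedance if $w(a) > a$, or if $a < 0$ and $w(a) = a$. - $w$ is a derangement if no $a \in S$ with $a > 0$ has $w(a) = a$. - $d^B_n(x) = \sum_{w \text{ derangement}} x^{\mathrm{exc}_B(w)}$, where $\mathrm{exc}_B(w)$ is the number of $B$-excedances, and $d^B_0 = 1$. - $f^+_n, f^-_n$ are the unique real polynomials with $d^B_n = f^+_n + f^-_n$, $f^+_n(x) = x^n f^+_n(1/x)$ and $f^-_n(x) = x^{n+1} f^-_n(1/x)$. *)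

theory Defs
  imports "HOL-Computational_Algebra.Polynomial"
begin

text \<open>A signed permutation of [n]: a pair (S, w) where S contains exactly one of
  i, -i for each i in {1..n} and nothing else, and w is a bijection S -> S
  (extended by the identity outside S, so that each signed permutation has a
  unique representative).\<close>
definition signed_perms :: "nat \<Rightarrow> (int set \<times> (int \<Rightarrow> int)) set" where
  "signed_perms n = {(S, w).
     S \<subseteq> {a. a \<noteq> 0 \<and> \<bar>a\<bar> \<le> int n} \<and>
     (\<forall>i\<in>{1..n}. (int i \<in> S) \<noteq> (- int i \<in> S)) \<and>
     bij_betw w S S \<and> (\<forall>x. x \<notin> S \<longrightarrow> w x = x)}"

definition is_B_exc :: "int set \<times> (int \<Rightarrow> int) \<Rightarrow> int \<Rightarrow> bool" where
  "is_B_exc p a \<longleftrightarrow> a \<in> fst p \<and> (snd p a > a \<or> (a < 0 \<and> snd p a = a))"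

definition exc_B :: "int set \<times> (int \<Rightarrow> int) \<Rightarrow> nat" where
  "exc_B p = card {a. is_B_exc p a}"

definition is_derangement :: "int set \<times> (int \<Rightarrow> int) \<Rightarrow> bool" where
  "is_derangement p \<longleftrightarrow> (\<forall>a\<in>fst p. a > 0 \<longrightarrow> snd p a \<noteq> a)"

definition dB :: "nat \<Rightarrow> real poly" where
  "dB n = (\<Sum>p\<in>{p\<in>signed_perms n. is_derangement p}. monom 1 (exc_B p))"

definition fplus_fminus :: "nat \<Rightarrow> real poly \<times> real poly" where
  "fplus_fminus n = (THE (p, q). dB n = p + q \<and>
      (\<forall>x::real. x \<noteq> 0 \<longrightarrow> poly p x = x ^ n * poly p (1 / x)) \<and>
      (\<forall>x::real. x \<noteq> 0 \<longrightarrow> poly q x = x ^ (n + 1) * poly q (1 / x)))"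

definition fplus :: "nat \<Rightarrow> real poly" where
  "fplus n = fst (fplus_fminus n)"

definition fminus :: "nat \<Rightarrow> real poly" where
  "fminus n = snd (fplus_fminus n)"

end

theory Submission imports Defs "HOL-Combinatorics.Permutations" begin

definition palc :: "nat \<Rightarrow> real poly \<Rightarrow> bool" where
  "palc k p \<longleftrightarrow> (\<forall>i. coeff p i = (if i \<le> k then coeff p (k - i) else 0))"

lemma palc_poly:
  assumes "palc k p" "x \<noteq> 0"
  shows "poly p x = x ^ k * poly p (1 / x)"
proof -
  have dg: "degree p \<le> k"
    using assms(1) unfolding palc_def by (intro degree_le) auto
  have "poly p x = (\<Sum>i\<le>k. coeff p i * x ^ i)"
    using dg by (auto simp: poly_altdef coeff_eq_0 le_degree intro!: sum.mono_neutral_left)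
  also have "\<dots> = (\<Sum>i\<le>k. coeff p (k - i) * x ^ (k - i))"
    by (rule sum.reindex_bij_witness[of _ "\<lambda>i. k - i" "\<lambda>i. k - i"]) auto
  also have "\<dots> = (\<Sum>i\<le>k. coeff p i * x ^ (k - i))"
  proof (intro sum.cong refl)
    fix i assume "i \<in> {..k}"
    then show "coeff p (k - i) * x ^ (k - i) = coeff p i * x ^ (k - i)"
      using assms(1) unfolding palc_def by (metis atMost_iff diff_diff_cancel diff_le_self)
  qed
  also have "\<dots> = x ^ k * (\<Sum>i\<le>k. coeff p i * (1/x) ^ i)"
    unfolding sum_distrib_left
  proof (intro sum.cong refl)
    fix i assume "i \<in> {..k}"
    then have "x ^ (k - i) = x ^ k / x ^ i" using assms(2) by (simp add: power_diff)
    then show "coeff p i * x ^ (k - i) = x ^ k * (coeff p i * (1 / x) ^ i)"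
      by (simp add: power_one_over)
  qed
  also have "(\<Sum>i\<le>k. coeff p i * (1/x) ^ i) = poly p (1/x)"
    using dg by (auto simp: poly_altdef coeff_eq_0 le_degree intro!: sum.mono_neutral_right)
  finally show ?thesis .
qed


lemma palcD: "palc k p \<Longrightarrow> i \<le> k \<Longrightarrow> coeff p i = coeff p (k - i)"
  unfolding palc_def by metis
lemma palcD0: "palc k p \<Longrightarrow> k < i \<Longrightarrow> coeff p i = 0"
  unfolding palc_def by (metis not_le)
lemma palcI: "(\<And>i. i \<le> k \<Longrightarrow> coeff p i = coeff p (k - i)) \<Longrightarrow> (\<And>i. k < i \<Longrightarrow> coeff p i = 0) \<Longrightarrow> palc k p"
  unfolding palc_def by (metis not_le)

lemma palc_0[simp]: "palc k 0" by (simp add: palc_def)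
lemma palc_add: "palc k p \<Longrightarrow> palc k q \<Longrightarrow> palc k (p + q)"
  by (intro palcI) (simp only: coeff_add, metis palcD, simp add: palcD0)
lemma palc_diff: "palc k p \<Longrightarrow> palc k q \<Longrightarrow> palc k (p - q)"
  by (intro palcI) (simp only: coeff_diff, metis palcD, simp add: palcD0)
lemma palc_smult: "palc k p \<Longrightarrow> palc k (smult c p)"
  by (intro palcI) (simp only: coeff_smult, metis palcD, simp add: palcD0)
lemma palc_1: "palc 0 1"
  by (intro palcI) (auto simp: coeff_1)

lemma coeff_xmult: "coeff ([:0,1:] * (h::real poly)) i = (if i = 0 then 0 else coeff h (i - 1))"
  by (cases i) (auto simp: coeff_pCons)

lemma coeff_1xmult: "coeff ([:1,1:] * (h::real poly)) i = coeff h i + (if i = 0 then 0 else coeff h (i - 1))"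
  by (cases i) (auto simp: coeff_pCons)

lemma palc_x: assumes "palc k h" shows "palc (k+2) ([:0,1:] * h)"
proof (intro palcI)
  fix i assume i: "i \<le> k + 2"
  show "coeff ([:0, 1:] * h) i = coeff ([:0, 1:] * h) (k + 2 - i)"
  proof (cases "i = 0")
    case True then show ?thesis using palcD0[OF assms, of "k+1"] by (simp only: coeff_xmult; simp)
  next
    case False
    show ?thesis
    proof (cases "i = k + 2")
      case True then show ?thesis using palcD0[OF assms, of "k+1"] by (simp only: coeff_xmult; simp)
    next
      case False
      with \<open>i \<noteq> 0\<close> i have "i - 1 \<le> k" "k + 2 - i - 1 = k - (i - 1)" "k + 2 - i \<noteq> 0" by auto
      then show ?thesis using palcD[OF assms, of "i - 1"] \<open>i \<noteq> 0\<close> by (simp only: coeff_xmult; simp)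
    qed
  qed
next
  fix i assume "k + 2 < i"
  then show "coeff ([:0, 1:] * h) i = 0" using palcD0[OF assms, of "i - 1"] by (simp only: coeff_xmult; simp)
qed

lemma palc_1x: assumes "palc k h" shows "palc (k+1) ([:1,1:] * h)"
proof (intro palcI)
  fix i assume i: "i \<le> k + 1"
  show "coeff ([:1, 1:] * h) i = coeff ([:1, 1:] * h) (k + 1 - i)"
  proof (cases "i = 0")
    case True then show ?thesis using palcD0[OF assms, of "k+1"] palcD[OF assms, of 0]
      by (simp only: coeff_1xmult; simp)
  next
    case False
    show ?thesis
    proof (cases "i = k + 1")
      case True then show ?thesis using palcD0[OF assms, of "k+1"] palcD[OF assms, of k]
        by (simp only: coeff_1xmult; simp)
    next
      case False
      with \<open>i \<noteq> 0\<close> i have "i - 1 \<le> k" "i \<le> k" "k + 1 - i - 1 = k - i" "k + 1 - i = k - (i - 1)" "k + 1 - i \<noteq> 0" by auto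
      then show ?thesis using palcD[OF assms, of "i - 1"] palcD[OF assms, of i] \<open>i \<noteq> 0\<close>
        by (simp only: coeff_1xmult; simp)
    qed
  qed
next
  fix i assume "k + 1 < i"
  then show "coeff ([:1, 1:] * h) i = 0" using palcD0[OF assms, of "i - 1"] palcD0[OF assms, of i]
    by (simp only: coeff_1xmult; simp)
qed

lemma coeff_dop: "coeff (smult (2 * real m) ([:0,1:] * f) + [:0,2,-2:] * pderiv f) i =
   (if i = 0 then 0 else 2 * real i * coeff f i + 2 * (real m + 1 - real i) * coeff f (i - 1))"
proof -
  have e: "[:0,2,-2:] * pderiv f = smult 2 ([:0,1:] * pderiv f) - smult 2 ([:0,1:] * ([:0,1:] * pderiv f))"
    by (simp add: algebra_simps smult_add_right)
  show ?thesis
  proof (cases i)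
    case 0 then show ?thesis by (simp add: e coeff_xmult)
  next
    case (Suc j)
    show ?thesis
    proof (cases j)
      case 0 then show ?thesis using Suc by (simp add: e coeff_xmult coeff_pderiv algebra_simps)
    next
      case (Suc l)
      then show ?thesis using \<open>i = Suc j\<close> by (simp add: e coeff_xmult coeff_pderiv algebra_simps)
    qed
  qed
qed


lemma palc_dop: assumes "palc m f"
  shows "palc (m+1) (smult (2 * real m) ([:0,1:] * f) + [:0,2,-2:] * pderiv f)"
proof (intro palcI)
  fix i assume i: "i \<le> m + 1"
  have z: "coeff f (m+1) = 0" using palcD0[OF assms, of "m+1"] by simp
  show "coeff (smult (2 * real m) ([:0,1:] * f) + [:0,2,-2:] * pderiv f) i =
        coeff (smult (2 * real m) ([:0,1:] * f) + [:0,2,-2:] * pderiv f) (m + 1 - i)"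
  proof (cases "i = 0 \<or> i = m + 1")
    case True
    then show ?thesis using z by (auto simp only: coeff_dop; simp)
  next
    case False
    then have "i \<noteq> 0" "m + 1 - i \<noteq> 0" "i \<le> m" "i - 1 \<le> m" "m + 1 - i - 1 = m - i" "m + 1 - i = m - (i - 1)"
      "real (m + 1 - i) = real m + 1 - real i"
      using i by auto
    then show ?thesis using palcD[OF assms, of i] palcD[OF assms, of "i - 1"]
      by (simp only: coeff_dop; simp add: algebra_simps)
  qed
next
  fix i assume "m + 1 < i"
  then show "coeff (smult (2 * real m) ([:0,1:] * f) + [:0,2,-2:] * pderiv f) i = 0"
    using palcD0[OF assms, of i] palcD0[OF assms, of "i - 1"] by (simp only: coeff_dop; simp)
qed

lemma poly_ext_real: "(\<And>x::real. poly p x = poly q x) \<Longrightarrow> p = q"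
  using poly_eq_poly_eq_iff by blast

fun FF :: "nat \<Rightarrow> real poly \<times> real poly" where
  "FF 0 = (1, 0)"
| "FF (Suc 0) = (0, [:0,1:])"
| "FF (Suc (Suc n)) = (let a1 = fst (FF (Suc n)); b1 = snd (FF (Suc n));
                            a0 = fst (FF n); b0 = snd (FF n) in
    ([:-1, 2 * real (n+1):] * a1 + [:0,2,-2:] * pderiv a1 + [:0, 2 * real (n+1):] * a0 + (a1 + b1),
     [:0,1:] * a1 + smult (2 * real (n+2)) ([:0,1:] * b1) + [:0,2,-2:] * pderiv b1
       - [:1,1:] * b1 + [:0, 2 * real (n+1):] * b0))"

fun g :: "nat \<Rightarrow> real poly" where
  "g 0 = 1"
| "g (Suc 0) = [:0,1:]"
| "g (Suc (Suc n)) = smult (2 * real n + 3) ([:0,1:] * g (Suc n)) + [:0,2,-2:] * pderiv (g (Suc n))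
     + smult (2 * (real n + 1)) ([:0,1:] * g n)"

lemma FF_palc: "palc n (fst (FF n)) \<and> palc (n+1) (snd (FF n))"
proof (induction n rule: FF.induct)
  case 1 then show ?case using palc_1 by simp
next
  case 2
  have "palc 2 [:0,1:]" by (intro palcI) (auto simp: coeff_pCons split: nat.splits)
  then show ?case by (simp add: numeral_2_eq_2)
next
  case (3 n)
  define a1 where "a1 = fst (FF (Suc n))"
  define b1 where "b1 = snd (FF (Suc n))"
  define a0 where "a0 = fst (FF n)"
  define b0 where "b0 = snd (FF n)"
  have pa1: "palc (n+1) a1" and pb1: "palc (n+2) b1" and pa0: "palc n a0" and pb0: "palc (n+1) b0"
    using 3 by (simp_all add: a1_def b1_def a0_def b0_def)
  have e1: "fst (FF (Suc (Suc n))) = (smult (2 * real (n+1)) ([:0,1:] * a1) + [:0,2,-2:] * pderiv a1) + b1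
            + smult (2 * real (n+1)) ([:0,1:] * a0)"
    unfolding a1_def b1_def a0_def b0_def
    by (rule poly_ext_real) (simp add: Let_def algebra_simps)
  have e2: "snd (FF (Suc (Suc n))) = [:0,1:] * a1 + (smult (2 * real (n+2)) ([:0,1:] * b1) + [:0,2,-2:] * pderiv b1)
            - [:1,1:] * b1 + smult (2 * real (n+1)) ([:0,1:] * b0)"
    unfolding a1_def b1_def a0_def b0_def
    by (rule poly_ext_real) (simp add: Let_def algebra_simps)
  have eq: "n+1+1 = n+2" "n+1+2 = n+3" "n+2+1 = n+3" by simp_all
  have A1: "palc (n+2) (smult (2 * real (n+1)) ([:0,1:] * a1) + [:0,2,-2:] * pderiv a1)"
    using palc_dop[OF pa1] unfolding eq .
  have A2: "palc (n+2) (smult (2 * real (n+1)) ([:0,1:] * a0))"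
    using palc_smult[OF palc_x[OF pa0]] unfolding eq .
  have B1: "palc (n+3) ([:0,1:] * a1)" using palc_x[OF pa1] unfolding eq .
  have B2: "palc (n+3) (smult (2 * real (n+2)) ([:0,1:] * b1) + [:0,2,-2:] * pderiv b1)"
    using palc_dop[OF pb1] unfolding eq .
  have B3: "palc (n+3) ([:1,1:] * b1)" using palc_1x[OF pb1] unfolding eq .
  have B4: "palc (n+3) (smult (2 * real (n+1)) ([:0,1:] * b0))"
    using palc_smult[OF palc_x[OF pb0]] unfolding eq .
  have "palc (n+2) (fst (FF (Suc (Suc n))))"
    unfolding e1 by (rule palc_add[OF palc_add[OF A1 pb1] A2])
  moreover have "palc (n+3) (snd (FF (Suc (Suc n))))"
    unfolding e2 by (rule palc_add[OF palc_diff[OF palc_add[OF B1 B2] B3] B4])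
  ultimately show ?case by (simp add: numeral_3_eq_3 numeral_2_eq_2)
qed

lemma FF_g: "fst (FF n) + snd (FF n) = g n"
proof (induction n rule: less_induct)
  case (less n)
  show ?case
  proof (cases n rule: FF.cases)
    case (3 k)
    have h1: "g (Suc k) = fst (FF (Suc k)) + snd (FF (Suc k))" using less 3 by simp
    have h0: "g k = fst (FF k) + snd (FF k)" using less 3 by simp
    show ?thesis unfolding 3 g.simps h1 h0
      by (rule poly_ext_real) (simp add: Let_def algebra_simps pderiv_add)
  qed simp_all
qed



definition spA :: "int set \<Rightarrow> (int set \<times> (int \<Rightarrow> int)) set" where
  "spA A = {(S, w). S \<subseteq> A \<union> uminus ` A \<and> (\<forall>i\<in>A. (i \<in> S) \<noteq> (- i \<in> S)) \<and> w permutes S}"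

definition DerA :: "int set \<Rightarrow> (int set \<times> (int \<Rightarrow> int)) set" where
  "DerA A = {p \<in> spA A. is_derangement p}"

definition DA :: "int set \<Rightarrow> real poly" where
  "DA A = (\<Sum>p\<in>DerA A. monom 1 (exc_B p))"

definition Eset :: "int set \<times> (int \<Rightarrow> int) \<Rightarrow> int set" where
  "Eset p = {a. is_B_exc p a}"

lemma bij_fix_iff_permutes: "(bij_betw w S S \<and> (\<forall>x. x \<notin> S \<longrightarrow> w x = x)) \<longleftrightarrow> w permutes S"
  by (auto intro: bij_imp_permutes permutes_imp_bij permutes_not_in)

lemma signed_perms_eq: "signed_perms n = spA {1..int n}"
proof -
  have e1: "{a. a \<noteq> 0 \<and> \<bar>a\<bar> \<le> int n} = {1..int n} \<union> uminus ` {1..int n}"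
  proof (intro set_eqI iffI)
    fix a :: int assume "a \<in> {a. a \<noteq> 0 \<and> \<bar>a\<bar> \<le> int n}"
    then show "a \<in> {1..int n} \<union> uminus ` {1..int n}"
      by (cases "a > 0") (auto intro!: image_eqI[of _ _ "-a"])
  qed auto
  have e2: "(\<forall>i\<in>{1..n}. P (int i)) \<longleftrightarrow> (\<forall>i\<in>{1..int n}. P i)" for P
  proof
    assume h: "\<forall>i\<in>{1..n}. P (int i)"
    show "\<forall>i\<in>{1..int n}. P i"
    proof
      fix i assume "i \<in> {1..int n}"
      then have "nat i \<in> {1..n}" "int (nat i) = i" by auto
      then show "P i" using h by metis
    qed
  qed auto
  show ?thesis
  proof (intro set_eqI)
    fix p :: "int set \<times> (int \<Rightarrow> int)"
    obtain S w where p: "p = (S, w)" by (cases p)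
    show "p \<in> signed_perms n \<longleftrightarrow> p \<in> spA {1..int n}"
      using e2[of "\<lambda>j. (j \<in> S) \<noteq> (- j \<in> S)"]
      unfolding p signed_perms_def spA_def e1 bij_fix_iff_permutes[symmetric] by simp
  qed
qed

lemma dB_DA: "dB n = DA {1..int n}"
  unfolding dB_def DA_def DerA_def signed_perms_eq ..

lemma finite_spA: assumes "finite A" shows "finite (spA A)"
proof -
  let ?U = "A \<union> uminus ` A"
  have "spA A \<subseteq> Pow ?U \<times> {w. w permutes ?U}"
    unfolding spA_def by (auto intro: permutes_subset)
  moreover have "finite (Pow ?U \<times> {w. w permutes ?U})"
    using assms by (auto intro: finite_permutations)
  ultimately show ?thesis by (rule finite_subset)
qed

lemma finite_DerA: "finite A \<Longrightarrow> finite (DerA A)"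
  unfolding DerA_def using finite_spA by auto

lemma spA_fin: assumes "finite A" "p \<in> spA A" shows "finite (fst p)"
proof -
  have "fst p \<subseteq> A \<union> uminus ` A" using assms(2) unfolding spA_def by auto
  then show ?thesis using assms(1) finite_subset by blast
qed

lemma Eset_sub: "Eset p \<subseteq> fst p"
  unfolding Eset_def is_B_exc_def by auto

lemma exc_Eset: "exc_B p = card (Eset p)"
  unfolding exc_B_def Eset_def ..

lemma abs_mem: fixes a :: int assumes "a \<in> A \<union> uminus ` A" "\<forall>a\<in>A. a > 0" shows "\<bar>a\<bar> \<in> A"
  using assms(1)
proof
  assume "a \<in> A" then have "a > 0" using assms(2) by blast
  then show ?thesis using \<open>a \<in> A\<close> by simp
next
  assume "a \<in> uminus ` A" then obtain x where "x \<in> A" "a = - x" by blast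
  moreover have "x > 0" using assms(2) \<open>x \<in> A\<close> by blast
  ultimately show ?thesis by simp
qed

lemma card_spA: assumes "finite A" "\<forall>a\<in>A. a > 0" "p \<in> spA A" shows "card (fst p) = card A"
proof -
  obtain S w where p: "p = (S, w)" by (cases p)
  have S: "S \<subseteq> A \<union> uminus ` A" "\<forall>i\<in>A. (i \<in> S) \<noteq> (- i \<in> S)" using assms(3) p unfolding spA_def by auto
  have "inj_on abs S"
  proof (rule inj_onI)
    fix a b assume ab: "a \<in> S" "b \<in> S" "\<bar>a\<bar> = \<bar>b\<bar>"
    show "a = b"
    proof (rule ccontr)
      assume "a \<noteq> b"
      then have "b = - a" using ab(3) by (auto simp: abs_if split: if_splits)
      moreover have "\<bar>a\<bar> \<in> A" using ab(1) S(1) assms(2) abs_mem by blast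
      moreover have "\<bar>a\<bar> \<in> S" "- \<bar>a\<bar> \<in> S" using ab(1,2) \<open>b = - a\<close> by (auto simp: abs_if)
      ultimately show False using S(2) by blast
    qed
  qed
  moreover have "abs ` S = A"
  proof
    show "abs ` S \<subseteq> A" using S(1) assms(2) abs_mem by blast
    show "A \<subseteq> abs ` S"
    proof
      fix i assume i: "i \<in> A"
      then have "i \<in> S \<or> -i \<in> S" using S(2) by blast
      moreover have "i > 0" using assms(2) i by blast
      ultimately show "i \<in> abs ` S" by (metis abs_minus_cancel abs_of_pos image_eqI)
    qed
  qed
  ultimately show ?thesis using p card_image by fastforce
qed

lemma DA_empty: "DA {} = 1"
proof -
  have "spA {} = {({}, id)}" unfolding spA_def by auto
  then have "DerA {} = {({}, id)}" unfolding DerA_def is_derangement_def by auto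
  then show ?thesis unfolding DA_def exc_B_def is_B_exc_def by simp
qed


lemma perm_ins:
  assumes "w permutes S" "b \<in> S" "s \<notin> S"
  shows "transpose (w b) s \<circ> w permutes insert s S"
proof (rule permutes_compose)
  show "w permutes insert s S" using assms(1) by (rule permutes_subset) auto
  show "transpose (w b) s permutes insert s S"
    using assms by (intro permutes_swap_id) (auto simp: permutes_in_image)
qed

lemma perm_del:
  assumes "w permutes S" "s \<in> S"
  shows "transpose s (w s) \<circ> w permutes S - {s}"
proof (rule permutes_superset)
  show "transpose s (w s) \<circ> w permutes S"
    using assms by (intro permutes_compose permutes_swap_id) (auto simp: permutes_in_image)
  show "\<And>x. x \<in> S - (S - {s}) \<Longrightarrow> (transpose s (w s) \<circ> w) x = x" by auto
qed

lemma perm_two: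
  assumes "w permutes S" "b \<notin> S" "s \<notin> S"
  shows "transpose b s \<circ> w permutes insert s (insert b S)"
proof (rule permutes_compose)
  show "w permutes insert s (insert b S)" using assms(1) by (rule permutes_subset) auto
  show "transpose b s permutes insert s (insert b S)" by (intro permutes_swap_id) auto
qed

lemma perm_del3:
  assumes "w permutes S" "s \<in> S" "w (w s) = s"
  shows "transpose (w s) s \<circ> w permutes S - {s, w s}"
proof (rule permutes_superset)
  show "transpose (w s) s \<circ> w permutes S"
    using assms by (intro permutes_compose permutes_swap_id) (auto simp: permutes_in_image)
  show "\<And>x. x \<in> S - (S - {s, w s}) \<Longrightarrow> (transpose (w s) s \<circ> w) x = x" using assms(3) by auto
qed

definition sm :: "int \<Rightarrow> int set \<Rightarrow> int" where "sm m S = (if m \<in> S then m else - m)"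

definition ins :: "(int set \<times> (int \<Rightarrow> int)) \<times> (int \<times> int) \<Rightarrow> int set \<times> (int \<Rightarrow> int)" where
  "ins x = (case x of (p, (b, s)) \<Rightarrow> (insert s (fst p), transpose (snd p b) s \<circ> snd p))"

definition del2 :: "int \<Rightarrow> int set \<times> (int \<Rightarrow> int) \<Rightarrow> (int set \<times> (int \<Rightarrow> int)) \<times> (int \<times> int)" where
  "del2 m p = (let S = fst p; w = snd p; s = sm m S in ((S - {s}, transpose s (w s) \<circ> w), (inv w s, s)))"

definition two :: "int \<times> ((int set \<times> (int \<Rightarrow> int)) \<times> int) \<Rightarrow> int set \<times> (int \<Rightarrow> int)" where
  "two x = (case x of (b, (p, s)) \<Rightarrow> (insert s (insert b (fst p)), transpose b s \<circ> snd p))"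

definition del3 :: "int \<Rightarrow> int set \<times> (int \<Rightarrow> int) \<Rightarrow> int \<times> ((int set \<times> (int \<Rightarrow> int)) \<times> int)" where
  "del3 m p = (let S = fst p; w = snd p; s = sm m S in (w s, ((S - {s, w s}, transpose (w s) s \<circ> w), s)))"

definition fixins :: "int \<Rightarrow> int set \<times> (int \<Rightarrow> int) \<Rightarrow> int set \<times> (int \<Rightarrow> int)" where
  "fixins m p = (insert (- m) (fst p), snd p)"

definition delfix :: "int \<Rightarrow> int set \<times> (int \<Rightarrow> int) \<Rightarrow> int set \<times> (int \<Rightarrow> int)" where
  "delfix m p = (fst p - {- m}, snd p)"

lemma spA_bounds:
  assumes "(S, w) \<in> spA A" "\<forall>a\<in>A. 0 < a \<and> a < m" "x \<in> S"
  shows "- m < x" "x < m" "x \<noteq> 0" "x \<noteq> m" "x \<noteq> - m" "w x \<in> S"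
proof -
  have "x \<in> A \<union> uminus ` A" using assms(1,3) unfolding spA_def by auto
  then show "- m < x" "x < m" "x \<noteq> 0" "x \<noteq> m" "x \<noteq> - m" using assms(2) by auto
  show "w x \<in> S" using assms(1,3) unfolding spA_def by (auto simp: permutes_in_image)
qed

lemma DerA_facts_gen:
  fixes A :: "int set" and m :: int
  assumes finA: "finite A" and posA: "\<forall>a\<in>A. 0 < a \<and> a < m" and "(S, w) \<in> DerA A"
  shows "S \<subseteq> A \<union> uminus ` A" "\<forall>i\<in>A. (i \<in> S) \<noteq> (- i \<in> S)" "w permutes S"
    "\<And>a. a \<in> S \<Longrightarrow> a > 0 \<Longrightarrow> w a \<noteq> a"
    "\<And>x. x \<in> S \<Longrightarrow> - m < x \<and> x < m \<and> x \<noteq> 0 \<and> w x \<in> S"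
    "m \<notin> S" "- m \<notin> S" "finite S"
proof -
  have sp: "(S, w) \<in> spA A" using assms(3) unfolding DerA_def by auto
  show "S \<subseteq> A \<union> uminus ` A" "\<forall>i\<in>A. (i \<in> S) \<noteq> (- i \<in> S)" "w permutes S"
    using sp unfolding spA_def by auto
  show "\<And>a. a \<in> S \<Longrightarrow> a > 0 \<Longrightarrow> w a \<noteq> a" using assms(3) unfolding DerA_def is_derangement_def by auto
  show "\<And>x. x \<in> S \<Longrightarrow> - m < x \<and> x < m \<and> x \<noteq> 0 \<and> w x \<in> S"
    using spA_bounds[OF sp posA] by blast
  then show "m \<notin> S" "- m \<notin> S" by force+
  show "finite S" using spA_fin[OF finA sp] by simp
qed


lemma pderiv_sum': "pderiv (sum f A) = (\<Sum>x\<in>A. pderiv (f x))"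
  using higher_pderiv_sum[of 1 f A] by simp

lemma smult_sum_r: "smult c (sum f A) = (\<Sum>x\<in>A. smult c (f x))"
  by (induction A rule: infinite_finite_induct) (simp_all add: smult_add_right)

lemma poly_ext_real': "(\<And>x::real. poly p x = poly q x) \<Longrightarrow> p = q"
  using poly_eq_poly_eq_iff by blast

lemma phi_eq:
  assumes "k \<le> N"
  shows "monom 1 (k+1) + of_nat (2*k) * monom 1 k + of_nat (2*(N-k)) * monom 1 (k+1)
     = smult (2 * real N + 1) ([:0,1:] * monom 1 k) + [:0,2,-2:] * pderiv (monom (1::real) k)"
proof (rule poly_ext_real')
  fix x :: real
  have d: "real (N - k) = real N - real k" using assms by (simp add: of_nat_diff)
  show "poly (monom 1 (k+1) + of_nat (2*k) * monom 1 k + of_nat (2*(N-k)) * monom 1 (k+1)) x =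
        poly (smult (2 * real N + 1) ([:0,1:] * monom 1 k) + [:0,2,-2:] * pderiv (monom (1::real) k)) x"
  proof (cases k)
    case 0 then show ?thesis by (simp add: poly_monom pderiv_monom algebra_simps)
  next
    case (Suc j)
    then show ?thesis using d by (simp add: poly_monom pderiv_monom algebra_simps)
  qed
qed

lemma sum_split_E:
  assumes "finite S" "E \<subseteq> S"
  shows "(\<Sum>b\<in>S. monom 1 (k + (if b \<in> E then 0 else 1))) =
     of_nat (card E) * monom 1 k + of_nat (card S - card E) * monom (1::real) (k+1)"
proof -
  have fE: "finite E" using assms finite_subset by blast
  have "(\<Sum>b\<in>S. monom 1 (k + (if b \<in> E then 0 else 1))) =
        (\<Sum>b\<in>S - E. monom 1 (k + (if b \<in> E then 0 else 1))) + (\<Sum>b\<in>E. monom (1::real) (k + (if b \<in> E then 0 else 1)))"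
    by (rule sum.subset_diff[OF assms(2) assms(1)])
  also have "(\<Sum>b\<in>S - E. monom 1 (k + (if b \<in> E then 0 else 1))) = (\<Sum>b\<in>S - E. monom (1::real) (k + 1))"
    by (rule sum.cong) auto
  also have "(\<Sum>b\<in>E. monom 1 (k + (if b \<in> E then 0 else 1))) = (\<Sum>b\<in>E. monom (1::real) k)"
    by (rule sum.cong) auto
  finally show ?thesis using card_Diff_subset[OF fE assms(2)] by (simp add: add.commute)
qed

context
  fixes A :: "int set" and m :: int
  assumes finA: "finite A" and posA: "\<forall>a\<in>A. 0 < a \<and> a < m" and mpos: "0 < m"
begin

abbreviation "B \<equiv> insert m A"

definition P1 where "P1 = {p \<in> DerA B. snd p (sm m (fst p)) = sm m (fst p)}"
definition P2 where "P2 = {p \<in> DerA B. snd p (sm m (fst p)) \<noteq> sm m (fst p) \<and>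
     \<not> (snd p (snd p (sm m (fst p))) = sm m (fst p) \<and> snd p (sm m (fst p)) > 0)}"
definition P3 where "P3 = {p \<in> DerA B. snd p (sm m (fst p)) \<noteq> sm m (fst p) \<and>
     snd p (snd p (sm m (fst p))) = sm m (fst p) \<and> snd p (sm m (fst p)) > 0}"
definition T2 where "T2 = Sigma (DerA A) (\<lambda>p. fst p \<times> {m, - m})"
definition T3 where "T3 = Sigma A (\<lambda>b. DerA (A - {b}) \<times> {m, - m})"

lemma posB: "\<forall>a\<in>B. 0 < a" using posA mpos by auto

lemma spB_facts:
  assumes "(S, w) \<in> spA B"
  shows "sm m S \<in> S" "- sm m S \<notin> S" "sm m S = m \<or> sm m S = - m" "w permutes S"
    "S - {sm m S} \<subseteq> A \<union> uminus ` A"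
    "\<forall>i\<in>A. (i \<in> S) \<noteq> (- i \<in> S)"
proof -
  have S: "S \<subseteq> B \<union> uminus ` B" "\<forall>i\<in>B. (i \<in> S) \<noteq> (- i \<in> S)" "w permutes S"
    using assms unfolding spA_def by auto
  then show "sm m S \<in> S" "- sm m S \<notin> S" "sm m S = m \<or> sm m S = - m" "w permutes S"
    "\<forall>i\<in>A. (i \<in> S) \<noteq> (- i \<in> S)"
    unfolding sm_def by auto
  show "S - {sm m S} \<subseteq> A \<union> uminus ` A"
    using S(1,2) unfolding sm_def by auto
qed


lemmas DerA_facts = DerA_facts_gen[OF finA posA]

lemma fixins_mem: assumes "p \<in> DerA A" shows "fixins m p \<in> P1"
proof -
  obtain S w where p: "p = (S, w)" by (cases p)
  note F = DerA_facts[OF assms[unfolded p]]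
  have "w permutes insert (- m) S" using F(3) by (rule permutes_subset) auto
  moreover have "insert (- m) S \<subseteq> B \<union> uminus ` B" using F(1) by auto
  moreover have "\<forall>i\<in>B. (i \<in> insert (- m) S) \<noteq> (- i \<in> insert (- m) S)"
  proof
    fix i assume i: "i \<in> B"
    show "(i \<in> insert (- m) S) \<noteq> (- i \<in> insert (- m) S)"
    proof (cases "i = m")
      case True then show ?thesis using F(6) mpos by simp
    next
      case False
      then have "i \<in> A" using i by simp
      then have "i \<noteq> - m" "- i \<noteq> - m" using posA mpos False by auto
      then show ?thesis using F(2) \<open>i \<in> A\<close> by simp
    qed
  qed
  moreover have "\<forall>a\<in>insert (- m) S. a > 0 \<longrightarrow> w a \<noteq> a" using F(4) mpos by auto
  moreover have "sm m (insert (- m) S) = - m" using F(6) mpos unfolding sm_def by auto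
  moreover have "w (- m) = - m" using F(3,7) permutes_not_in by metis
  ultimately show ?thesis unfolding P1_def DerA_def spA_def fixins_def p
    by (simp add: is_derangement_def)
qed

lemma P1_facts:
  assumes "(S, w) \<in> P1"
  shows "- m \<in> S" "m \<notin> S" "w (- m) = - m"
proof -
  have d: "(S, w) \<in> DerA B" and f: "w (sm m S) = sm m S" using assms unfolding P1_def by auto
  have sp: "(S, w) \<in> spA B" using d unfolding DerA_def by auto
  have "sm m S \<in> S" using spB_facts[OF sp] by simp
  moreover have "sm m S \<noteq> m" using d f mpos \<open>sm m S \<in> S\<close> unfolding DerA_def is_derangement_def by auto
  ultimately show "- m \<in> S" "m \<notin> S" "w (- m) = - m" using f unfolding sm_def by (auto split: if_splits)
qed

lemma delfix_mem: assumes "p \<in> P1" shows "delfix m p \<in> DerA A"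
proof -
  obtain S w where p: "p = (S, w)" by (cases p)
  note F = P1_facts[OF assms[unfolded p]]
  have d: "(S, w) \<in> DerA B" using assms p unfolding P1_def by auto
  have sp: "(S, w) \<in> spA B" using d unfolding DerA_def by auto
  note G = spB_facts[OF sp]
  have "sm m S = - m" using F unfolding sm_def by auto
  then have "S - {- m} \<subseteq> A \<union> uminus ` A" using G(5) by simp
  moreover have "\<forall>i\<in>A. (i \<in> S - {- m}) \<noteq> (- i \<in> S - {- m})"
  proof
    fix i assume i: "i \<in> A"
    then have "i \<noteq> - m" "- i \<noteq> - m" using posA mpos by auto
    then show "(i \<in> S - {- m}) \<noteq> (- i \<in> S - {- m})" using G(6) i by simp
  qed
  moreover have "w permutes S - {- m}" by (rule permutes_superset[OF G(4)]) (use F(3) in auto)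
  moreover have "\<forall>a\<in>S - {- m}. a > 0 \<longrightarrow> w a \<noteq> a"
  proof -
    have "is_derangement (S, w)" using d unfolding DerA_def by simp
    then show ?thesis unfolding is_derangement_def by simp
  qed
  ultimately show ?thesis unfolding DerA_def spA_def delfix_def p by (simp add: is_derangement_def)
qed

lemma bij_P1: "bij_betw (fixins m) (DerA A) P1"
proof (rule bij_betw_byWitness[where f'="delfix m"])
  show "\<forall>a\<in>DerA A. delfix m (fixins m a) = a"
  proof
    fix p assume a: "p \<in> DerA A"
    obtain S w where p: "p = (S, w)" by (cases p)
    show "delfix m (fixins m p) = p" using DerA_facts(7)[OF a[unfolded p]] p
      unfolding delfix_def fixins_def by auto
  qed
  show "\<forall>a\<in>P1. fixins m (delfix m a) = a"
  proof
    fix p assume a: "p \<in> P1"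
    obtain S w where p: "p = (S, w)" by (cases p)
    show "fixins m (delfix m p) = p" using P1_facts(1)[OF a[unfolded p]] p
      unfolding delfix_def fixins_def by auto
  qed
  show "fixins m ` DerA A \<subseteq> P1" using fixins_mem by auto
  show "delfix m ` P1 \<subseteq> DerA A" using delfix_mem by auto
qed

lemma exc_fixins: assumes "p \<in> DerA A" shows "exc_B (fixins m p) = exc_B p + 1"
proof -
  obtain S w where p: "p = (S, w)" by (cases p)
  note F = DerA_facts[OF assms[unfolded p]]
  have w: "w (- m) = - m" using F(3,7) permutes_not_in by metis
  have "Eset (fixins m p) = insert (- m) (Eset p)"
    unfolding Eset_def is_B_exc_def fixins_def p using w mpos by auto
  moreover have "- m \<notin> Eset p" "finite (Eset p)"
    using Eset_sub[of p] F(7,8) p finite_subset by auto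
  ultimately show ?thesis unfolding exc_Eset by simp
qed

lemma sum_P1: "(\<Sum>p\<in>P1. monom 1 (exc_B p)) = (\<Sum>p\<in>DerA A. monom (1::real) (exc_B p + 1))"
  using sum.reindex_bij_betw[OF bij_P1, of "\<lambda>p. monom 1 (exc_B p)", symmetric] exc_fixins
  by (auto intro: sum.cong)

lemma ins_mem:
  assumes "p \<in> DerA A" "b \<in> fst p" "s \<in> {m, - m}"
  shows "ins (p, (b, s)) \<in> P2"
proof -
  obtain S w where p: "p = (S, w)" by (cases p)
  note F = DerA_facts[OF assms(1)[unfolded p]]
  have b: "b \<in> S" using assms(2) p by simp
  define c where "c = w b"
  define W where "W = transpose c s \<circ> w"
  have sS: "s \<notin> S" using assms(3) F(6,7) by auto
  have cS: "c \<in> S" using F(5)[OF b] c_def by simp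
  have cs: "c \<noteq> s" using cS sS by auto
  have ws: "w s = s" using F(3) sS permutes_not_in by metis
  have perm: "W permutes insert s S" unfolding W_def c_def using perm_ins[OF F(3) b sS] .
  have sub: "insert s S \<subseteq> B \<union> uminus ` B" using F(1) assms(3) by auto
  have sgn: "\<forall>i\<in>B. (i \<in> insert s S) \<noteq> (- i \<in> insert s S)"
  proof
    fix i assume i: "i \<in> B"
    show "(i \<in> insert s S) \<noteq> (- i \<in> insert s S)"
    proof (cases "i = m")
      case True then show ?thesis using F(6,7) mpos assms(3) by auto
    next
      case False
      then have "i \<in> A" using i by simp
      then have "i \<noteq> s" "- i \<noteq> s" using posA mpos False assms(3) by auto
      then show ?thesis using F(2) \<open>i \<in> A\<close> by simp
    qed
  qed
  have der: "\<forall>a\<in>insert s S. a > 0 \<longrightarrow> W a \<noteq> a"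
  proof (intro ballI impI)
    fix a assume a: "a \<in> insert s S" "a > 0"
    show "W a \<noteq> a"
    proof (cases "a = s")
      case True then show ?thesis using ws cs unfolding W_def by simp
    next
      case False
      then have aS: "a \<in> S" using a by simp
      have waS: "w a \<in> S" using F(5)[OF aS] by simp
      show ?thesis
      proof (cases "w a = c")
        case True then show ?thesis using aS sS unfolding W_def by auto
      next
        case False
        have "w a \<noteq> s" using waS sS by auto
        then have "W a = w a" using False unfolding W_def by simp
        then show ?thesis using F(4)[OF aS a(2)] by simp
      qed
    qed
  qed
  have smv: "sm m (insert s S) = s" using assms(3) F(6) mpos unfolding sm_def by auto
  have Ws: "W s = c" using ws unfolding W_def by simp
  have notP3: "\<not> (W (W s) = s \<and> W s > 0)"
  proof
    assume h: "W (W s) = s \<and> W s > 0"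
    have wcS: "w c \<in> S" using F(5)[OF cS] by simp
    have "w c = c"
    proof (rule ccontr)
      assume "w c \<noteq> c"
      moreover have "w c \<noteq> s" using wcS sS by auto
      ultimately have "W c = w c" unfolding W_def by simp
      then show False using h Ws \<open>w c \<noteq> s\<close> by simp
    qed
    then show False using F(4)[OF cS] h Ws by simp
  qed
  have "ins (p, (b, s)) = (insert s S, W)" unfolding ins_def p W_def c_def by simp
  moreover have "(insert s S, W) \<in> DerA B"
    using sub sgn perm der unfolding DerA_def spA_def by (simp add: is_derangement_def)
  ultimately show ?thesis unfolding P2_def using smv Ws cs notP3 by simp
qed

lemma DerB_facts:
  assumes "(S, w) \<in> DerA B"
  shows "sm m S \<in> S" "- sm m S \<notin> S" "sm m S = m \<or> sm m S = - m" "w permutes S"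
    "S - {sm m S} \<subseteq> A \<union> uminus ` A"
    "\<forall>i\<in>A. (i \<in> S) \<noteq> (- i \<in> S)"
    "\<And>a. a \<in> S \<Longrightarrow> a > 0 \<Longrightarrow> w a \<noteq> a"
    "\<And>a b. w a = w b \<Longrightarrow> a = b"
    "\<And>a. w a \<in> S \<longleftrightarrow> a \<in> S"
proof -
  have sp: "(S, w) \<in> spA B" using assms unfolding DerA_def by simp
  note G = spB_facts[OF sp]
  show "sm m S \<in> S" "- sm m S \<notin> S" "sm m S = m \<or> sm m S = - m" "w permutes S"
    "S - {sm m S} \<subseteq> A \<union> uminus ` A" "\<forall>i\<in>A. (i \<in> S) \<noteq> (- i \<in> S)" using G by auto
  have "is_derangement (S, w)" using assms unfolding DerA_def by simp
  then show "\<And>a. a \<in> S \<Longrightarrow> a > 0 \<Longrightarrow> w a \<noteq> a" unfolding is_derangement_def by simp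
  show "\<And>a b. w a = w b \<Longrightarrow> a = b" using G(4) by (metis permutes_inverses(2))
  show "\<And>a. w a \<in> S \<longleftrightarrow> a \<in> S" using G(4) by (rule permutes_in_image)
qed

lemma del2_mem:
  assumes "p \<in> P2"
  shows "del2 m p \<in> T2"
proof -
  obtain S w where p: "p = (S, w)" by (cases p)
  have d: "(S, w) \<in> DerA B" and c1: "w (sm m S) \<noteq> sm m S"
    and c2: "\<not> (w (w (sm m S)) = sm m S \<and> w (sm m S) > 0)"
    using assms p unfolding P2_def by auto
  note G = DerB_facts[OF d]
  define s where "s = sm m S"
  define c where "c = w s"
  define b where "b = inv w s"
  have wb: "w b = s" unfolding b_def using G(4) by (rule permutes_inverses(1))
  have sS: "s \<in> S" using G(1) s_def by simp
  have bS: "b \<in> S" using G(9)[of b] wb sS by simp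
  have cs: "c \<noteq> s" using c1 s_def c_def by simp
  have bs: "b \<noteq> s" using wb cs c_def by auto
  have smm: "s = m \<or> s = - m" using G(3) s_def by simp
  have Aneq: "\<And>i. i \<in> A \<Longrightarrow> i \<noteq> s \<and> - i \<noteq> s" using smm posA mpos by force
  have sub: "S - {s} \<subseteq> A \<union> uminus ` A" using G(5) s_def by simp
  have sgn: "\<forall>i\<in>A. (i \<in> S - {s}) \<noteq> (- i \<in> S - {s})"
  proof
    fix i assume i: "i \<in> A"
    show "(i \<in> S - {s}) \<noteq> (- i \<in> S - {s})" using Aneq[OF i] G(6) i by simp
  qed
  have perm: "transpose s c \<circ> w permutes S - {s}" unfolding c_def using perm_del[OF G(4) sS] .
  have der: "\<forall>a\<in>S - {s}. a > 0 \<longrightarrow> (transpose s c \<circ> w) a \<noteq> a"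
  proof (intro ballI impI)
    fix a assume a: "a \<in> S - {s}" "a > 0"
    show "(transpose s c \<circ> w) a \<noteq> a"
    proof (cases "a = b")
      case True
      have "c \<noteq> b"
      proof
        assume "c = b"
        then have "w (w s) = s \<and> w s > 0" using wb a(2) True c_def by simp
        then show False using c2 s_def by simp
      qed
      then show ?thesis using True wb by simp
    next
      case False
      have "w a \<noteq> s" using False wb G(8) by metis
      moreover have "w a \<noteq> c" using a(1) G(8) c_def by auto
      ultimately have "(transpose s c \<circ> w) a = w a" by simp
      then show ?thesis using G(7) a by simp
    qed
  qed
  have "((S - {s}, transpose s c \<circ> w)) \<in> DerA A"
    using sub sgn perm der unfolding DerA_def spA_def by (simp add: is_derangement_def)
  moreover have "del2 m p = ((S - {s}, transpose s c \<circ> w), (b, s))"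
    unfolding del2_def p s_def c_def b_def Let_def by simp
  moreover have "b \<in> S - {s}" using bS bs by simp
  ultimately show ?thesis unfolding T2_def using smm by auto
qed

lemma tr_tr: "transpose a b \<circ> (transpose b a \<circ> w) = w" "transpose a b \<circ> (transpose a b \<circ> w) = w"
  by (auto simp: fun_eq_iff transpose_def)

lemma del2_ins: assumes "x \<in> T2" shows "del2 m (ins x) = x"
proof -
  obtain S w b s where x: "x = ((S, w), (b, s))" by (cases x) auto
  have d: "(S, w) \<in> DerA A" and b: "b \<in> S" and s: "s \<in> {m, - m}"
    using assms x unfolding T2_def by auto
  note F = DerA_facts[OF d]
  have sS: "s \<notin> S" using s F(6,7) by auto
  have ws: "w s = s" using F(3) sS permutes_not_in by metis
  define W where "W = transpose (w b) s \<circ> w"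
  have perm: "W permutes insert s S" unfolding W_def using perm_ins[OF F(3) b sS] .
  have smv: "sm m (insert s S) = s" using s F(6) mpos unfolding sm_def by auto
  have Ws: "W s = w b" unfolding W_def using ws by simp
  have Wb: "W b = s" unfolding W_def by simp
  have iv: "inv W s = b" using perm Wb by (simp add: permutes_inv_eq)
  have "del2 m (ins x) = ((insert s S - {s}, transpose s (W s) \<circ> W), (inv W s, s))"
    unfolding del2_def ins_def x W_def Let_def by (simp add: smv)
  also have "\<dots> = x" unfolding x Ws iv using sS by (simp add: W_def tr_tr)
  finally show ?thesis .
qed

lemma ins_del2: assumes "p \<in> P2" shows "ins (del2 m p) = p"
proof -
  obtain S w where p: "p = (S, w)" by (cases p)
  have d: "(S, w) \<in> DerA B" using assms p unfolding P2_def by auto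
  note G = DerB_facts[OF d]
  define s where "s = sm m S"
  have sS: "s \<in> S" using G(1) s_def by simp
  have wb: "w (inv w s) = s" using G(4) by (rule permutes_inverses(1))
  have "ins (del2 m p) = (insert s (S - {s}), transpose ((transpose s (w s) \<circ> w) (inv w s)) s \<circ> (transpose s (w s) \<circ> w))"
    unfolding del2_def ins_def p Let_def s_def by simp
  also have "\<dots> = p" using sS wb unfolding p by (simp add: tr_tr insert_absorb)
  finally show ?thesis .
qed

lemma bij_P2: "bij_betw ins T2 P2"
proof (rule bij_betw_byWitness[where f'="del2 m"])
  show "\<forall>a\<in>T2. del2 m (ins a) = a" using del2_ins by blast
  show "\<forall>a\<in>P2. ins (del2 m a) = a" using ins_del2 by blast
  show "ins ` T2 \<subseteq> P2" unfolding T2_def using ins_mem by auto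
  show "del2 m ` P2 \<subseteq> T2" using del2_mem by auto
qed

lemma exc_ins:
  assumes "x \<in> T2" "x = (p, (b, s))"
  shows "exc_B (ins x) = exc_B p + (if b \<in> Eset p then 0 else 1)"
proof -
  obtain S w where p: "p = (S, w)" by (cases p)
  have d: "(S, w) \<in> DerA A" and b: "b \<in> S" and s: "s \<in> {m, - m}"
    using assms p unfolding T2_def by auto
  note F = DerA_facts[OF d]
  have sS: "s \<notin> S" using s F(6,7) by auto
  have ws: "w s = s" using F(3) sS permutes_not_in by metis
  define W where "W = transpose (w b) s \<circ> w"
  define y where "y = (if s = m then b else - m)"
  have insx: "ins x = (insert s S, W)" unfolding assms(2) p ins_def W_def by simp
  have bnd: "\<And>a. a \<in> S \<Longrightarrow> - m < a \<and> a < m" using F(5) by blast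
  have wbS: "w b \<in> S" using F(5)[OF b] by simp
  have E: "Eset (insert s S, W) = insert y (Eset p - {b})"
  proof (intro set_eqI)
    fix a
    show "a \<in> Eset (insert s S, W) \<longleftrightarrow> a \<in> insert y (Eset p - {b})"
    proof (cases "a = s")
      case True
      have "W s = w b" unfolding W_def using ws by simp
      then show ?thesis using True s bnd[OF wbS] bnd[OF b] sS b mpos
        unfolding Eset_def is_B_exc_def y_def p by auto
    next
      case False
      show ?thesis
      proof (cases "a = b")
        case True
        have "W b = s" unfolding W_def by simp
        then show ?thesis using True s bnd[OF b] sS b mpos \<open>a \<noteq> s\<close>
          unfolding Eset_def is_B_exc_def y_def p by auto
      next
        case False
        have "a \<noteq> y" using False \<open>a \<noteq> s\<close> s unfolding y_def by auto
        show ?thesis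
        proof (cases "a \<in> S")
          case True
          have "w a \<noteq> w b" using False F(3) by (metis permutes_inverses(2))
          moreover have "w a \<noteq> s" using F(5)[OF True] sS by auto
          ultimately have "W a = w a" unfolding W_def by simp
          then show ?thesis using True False \<open>a \<noteq> s\<close> \<open>a \<noteq> y\<close>
            unfolding Eset_def is_B_exc_def p by auto
        next
          case False
          then show ?thesis using \<open>a \<noteq> s\<close> \<open>a \<noteq> y\<close>
            unfolding Eset_def is_B_exc_def p by auto
        qed
      qed
    qed
  qed
  have fin: "finite (Eset p)" using Eset_sub[of p] F(8) p finite_subset by auto
  have ynot: "y \<notin> Eset p - {b}" using Eset_sub[of p] F(7) p unfolding y_def by auto
  have "card (Eset (ins x)) = card (Eset p - {b}) + 1"
    unfolding insx E using fin ynot by simp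
  moreover have "card (Eset p - {b}) = card (Eset p) - (if b \<in> Eset p then 1 else 0)"
    using fin by (simp add: card_Diff_singleton_if)
  moreover have "b \<in> Eset p \<Longrightarrow> card (Eset p) \<ge> 1" using fin by (metis card_0_eq empty_iff less_one not_le)
  ultimately show ?thesis unfolding exc_Eset by auto
qed

lemma DerAb_facts:
  assumes "b \<in> A" "(S, w) \<in> DerA (A - {b})"
  shows "S \<subseteq> (A - {b}) \<union> uminus ` (A - {b})" "\<forall>i\<in>A - {b}. (i \<in> S) \<noteq> (- i \<in> S)" "w permutes S"
    "\<And>a. a \<in> S \<Longrightarrow> a > 0 \<Longrightarrow> w a \<noteq> a"
    "\<And>x. x \<in> S \<Longrightarrow> - m < x \<and> x < m \<and> x \<noteq> 0 \<and> w x \<in> S"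
    "m \<notin> S" "- m \<notin> S" "finite S" "b \<notin> S" "- b \<notin> S"
proof -
  have f: "finite (A - {b})" using finA by simp
  have p: "\<forall>a\<in>A - {b}. 0 < a \<and> a < m" using posA by simp
  note F = DerA_facts_gen[OF f p assms(2)]
  show "S \<subseteq> (A - {b}) \<union> uminus ` (A - {b})" "\<forall>i\<in>A - {b}. (i \<in> S) \<noteq> (- i \<in> S)" "w permutes S"
    "\<And>a. a \<in> S \<Longrightarrow> a > 0 \<Longrightarrow> w a \<noteq> a"
    "\<And>x. x \<in> S \<Longrightarrow> - m < x \<and> x < m \<and> x \<noteq> 0 \<and> w x \<in> S"
    "m \<notin> S" "- m \<notin> S" "finite S" using F by auto
  have bp: "b > 0" using posA assms(1) by auto
  show "b \<notin> S"
  proof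
    assume "b \<in> S"
    then have "b \<in> (A - {b}) \<union> uminus ` (A - {b})" using F(1) by blast
    then obtain x where "x \<in> A - {b}" "b = - x" by blast
    then show False using bp posA by auto
  qed
  show "- b \<notin> S"
  proof
    assume "- b \<in> S"
    then have "- b \<in> (A - {b}) \<union> uminus ` (A - {b})" using F(1) by blast
    then have "- b \<in> A - {b} \<or> b \<in> A - {b}" by force
    then show False using bp posA by auto
  qed
qed

lemma two_mem:
  assumes "b \<in> A" "p \<in> DerA (A - {b})" "s \<in> {m, - m}"
  shows "two (b, (p, s)) \<in> P3"
proof -
  obtain S w where p: "p = (S, w)" by (cases p)
  note F = DerAb_facts[OF assms(1) assms(2)[unfolded p]]
  have bp: "0 < b" "b < m" using posA assms(1) by auto
  have sS: "s \<notin> S" using assms(3) F(6,7) by auto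
  have bs: "b \<noteq> s" "- b \<noteq> s" using bp assms(3) by auto
  define W where "W = transpose b s \<circ> w"
  have perm: "W permutes insert s (insert b S)" unfolding W_def using perm_two[OF F(3) F(9) sS] .
  have sub: "insert s (insert b S) \<subseteq> B \<union> uminus ` B" using F(1) assms(3) assms(1) by auto
  have sgn: "\<forall>i\<in>B. (i \<in> insert s (insert b S)) \<noteq> (- i \<in> insert s (insert b S))"
  proof
    fix i assume i: "i \<in> B"
    show "(i \<in> insert s (insert b S)) \<noteq> (- i \<in> insert s (insert b S))"
    proof (cases "i = m")
      case True then show ?thesis using F(6,7) mpos assms(3) bp by auto
    next
      case False
      then have iA: "i \<in> A" using i by simp
      then have "i \<noteq> s" "- i \<noteq> s" using posA mpos False assms(3) by auto
      show ?thesis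
      proof (cases "i = b")
        case True then show ?thesis using F(10) bs \<open>i \<noteq> s\<close> bp by auto
      next
        case False
        then have "i \<noteq> b" "- i \<noteq> b" using bp posA iA by auto
        then show ?thesis using F(2) iA False \<open>i \<noteq> s\<close> \<open>- i \<noteq> s\<close> by simp
      qed
    qed
  qed
  have ws: "w s = s" using F(3) sS permutes_not_in by metis
  have wb: "w b = b" using F(3) F(9) permutes_not_in by metis
  have Ws: "W s = b" unfolding W_def using ws by simp
  have Wb: "W b = s" unfolding W_def using wb by simp
  have der: "\<forall>a\<in>insert s (insert b S). a > 0 \<longrightarrow> W a \<noteq> a"
  proof (intro ballI impI)
    fix a assume a: "a \<in> insert s (insert b S)" "a > 0"
    show "W a \<noteq> a"
    proof (cases "a = s \<or> a = b")
      case True then show ?thesis using Ws Wb bs by auto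
    next
      case False
      then have aS: "a \<in> S" using a by simp
      have "w a \<in> S" using F(5)[OF aS] by simp
      then have "w a \<noteq> b" "w a \<noteq> s" using F(9) sS by auto
      then have "W a = w a" unfolding W_def by simp
      then show ?thesis using F(4)[OF aS a(2)] by simp
    qed
  qed
  have smv: "sm m (insert s (insert b S)) = s" using assms(3) F(6) mpos bp unfolding sm_def by auto
  have "two (b, (p, s)) = (insert s (insert b S), W)" unfolding two_def p W_def by simp
  moreover have "(insert s (insert b S), W) \<in> DerA B"
    using sub sgn perm der unfolding DerA_def spA_def by (simp add: is_derangement_def)
  ultimately show ?thesis unfolding P3_def using smv Ws Wb bs bp by simp
qed

lemma del3_mem:
  assumes "p \<in> P3"
  shows "del3 m p \<in> T3"
proof -
  obtain S w where p: "p = (S, w)" by (cases p)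
  have d: "(S, w) \<in> DerA B" and c1: "w (sm m S) \<noteq> sm m S"
    and c2: "w (w (sm m S)) = sm m S" and c3: "w (sm m S) > 0"
    using assms p unfolding P3_def by auto
  note G = DerB_facts[OF d]
  define s where "s = sm m S"
  define b where "b = w s"
  have sS: "s \<in> S" using G(1) s_def by simp
  have bS: "b \<in> S" using G(9)[of s] sS b_def by simp
  have bs: "b \<noteq> s" using c1 s_def b_def by simp
  have wb: "w b = s" using c2 s_def b_def by simp
  have bp: "b > 0" using c3 s_def b_def by simp
  have smm: "s = m \<or> s = - m" using G(3) s_def by simp
  have bA: "b \<in> A"
  proof -
    have "b \<in> A \<union> uminus ` A" using G(5) bS bs s_def by auto
    then show ?thesis using bp posA by auto
  qed
  have mbS: "- b \<notin> S" using G(6) bA bS by auto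
  have Aneq: "\<And>i. i \<in> A \<Longrightarrow> i \<noteq> s \<and> - i \<noteq> s" using smm posA mpos by force
  have sub: "S - {s, b} \<subseteq> (A - {b}) \<union> uminus ` (A - {b})"
  proof
    fix x assume x: "x \<in> S - {s, b}"
    then have "x \<in> A \<union> uminus ` A" using G(5) s_def by auto
    moreover have "x \<noteq> - b" using x mbS by auto
    ultimately show "x \<in> (A - {b}) \<union> uminus ` (A - {b})" using x by auto
  qed
  have sgn: "\<forall>i\<in>A - {b}. (i \<in> S - {s, b}) \<noteq> (- i \<in> S - {s, b})"
  proof
    fix i assume i: "i \<in> A - {b}"
    then have "i \<noteq> b" "- i \<noteq> b" using bp posA by auto
    then show "(i \<in> S - {s, b}) \<noteq> (- i \<in> S - {s, b})" using Aneq[of i] G(6) i by simp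
  qed
  have perm: "transpose b s \<circ> w permutes S - {s, b}"
    unfolding b_def using perm_del3[OF G(4) sS] c2 s_def by simp
  have der: "\<forall>a\<in>S - {s, b}. a > 0 \<longrightarrow> (transpose b s \<circ> w) a \<noteq> a"
  proof (intro ballI impI)
    fix a assume a: "a \<in> S - {s, b}" "a > 0"
    have "w a \<noteq> b" using a(1) G(8) b_def by auto
    moreover have "w a \<noteq> s" using a(1) G(8) wb by auto
    ultimately have "(transpose b s \<circ> w) a = w a" by simp
    then show "(transpose b s \<circ> w) a \<noteq> a" using G(7) a by simp
  qed
  have "(S - {s, b}, transpose b s \<circ> w) \<in> DerA (A - {b})"
    using sub sgn perm der unfolding DerA_def spA_def by (simp add: is_derangement_def)
  moreover have "del3 m p = (b, ((S - {s, b}, transpose b s \<circ> w), s))"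
    unfolding del3_def p s_def b_def Let_def by simp
  ultimately show ?thesis unfolding T3_def using smm bA by auto
qed

lemma del3_two: assumes "x \<in> T3" shows "del3 m (two x) = x"
proof -
  obtain b S w s where x: "x = (b, ((S, w), s))" by (cases x) auto
  have bA: "b \<in> A" and d: "(S, w) \<in> DerA (A - {b})" and s: "s \<in> {m, - m}"
    using assms x unfolding T3_def by auto
  note F = DerAb_facts[OF bA d]
  have bp: "0 < b" "b < m" using posA bA by auto
  have sS: "s \<notin> S" using s F(6,7) by auto
  have ws: "w s = s" using F(3) sS permutes_not_in by metis
  have smv: "sm m (insert s (insert b S)) = s" using s F(6) mpos bp unfolding sm_def by auto
  have e: "insert s (insert b S) - {s, b} = S" using sS F(9) by auto
  show ?thesis unfolding x two_def del3_def Let_def using smv ws e by (simp add: tr_tr)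
qed

lemma two_del3: assumes "p \<in> P3" shows "two (del3 m p) = p"
proof -
  obtain S w where p: "p = (S, w)" by (cases p)
  have d: "(S, w) \<in> DerA B" using assms p unfolding P3_def by auto
  note G = DerB_facts[OF d]
  define s where "s = sm m S"
  have sS: "s \<in> S" using G(1) s_def by simp
  have bS: "w s \<in> S" using G(9)[of s] sS by simp
  have e: "insert s (insert (w s) (S - {s, w s})) = S" using sS bS by auto
  show ?thesis unfolding p two_def del3_def Let_def using e[unfolded s_def] by (simp add: tr_tr)
qed

lemma bij_P3: "bij_betw two T3 P3"
proof (rule bij_betw_byWitness[where f'="del3 m"])
  show "\<forall>a\<in>T3. del3 m (two a) = a" using del3_two by blast
  show "\<forall>a\<in>P3. two (del3 m a) = a" using two_del3 by blast
  show "two ` T3 \<subseteq> P3" unfolding T3_def using two_mem by auto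
  show "del3 m ` P3 \<subseteq> T3" using del3_mem by auto
qed

lemma exc_two:
  assumes "x \<in> T3" "x = (b, (p, s))"
  shows "exc_B (two x) = exc_B p + 1"
proof -
  obtain S w where p: "p = (S, w)" by (cases p)
  have bA: "b \<in> A" and d: "(S, w) \<in> DerA (A - {b})" and s: "s \<in> {m, - m}"
    using assms p unfolding T3_def by auto
  note F = DerAb_facts[OF bA d]
  have bp: "0 < b" "b < m" using posA bA by auto
  have sS: "s \<notin> S" using s F(6,7) by auto
  have ws: "w s = s" using F(3) sS permutes_not_in by metis
  have wb: "w b = b" using F(3) F(9) permutes_not_in by metis
  define W where "W = transpose b s \<circ> w"
  define y where "y = (if s = m then b else - m)"
  have twox: "two x = (insert s (insert b S), W)" unfolding assms(2) p two_def W_def by simp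
  have E: "Eset (insert s (insert b S), W) = insert y (Eset p)"
  proof (intro set_eqI)
    fix a
    show "a \<in> Eset (insert s (insert b S), W) \<longleftrightarrow> a \<in> insert y (Eset p)"
    proof (cases "a = s \<or> a = b")
      case True
      have "W s = b" "W b = s" unfolding W_def using ws wb by simp_all
      moreover have "s \<notin> Eset p" "b \<notin> Eset p" using Eset_sub[of p] sS F(9) p by auto
      ultimately show ?thesis using True s bp mpos
        unfolding Eset_def[of "(insert s (insert b S), W)"] is_B_exc_def y_def by auto
    next
      case False
      have "a \<noteq> y" using False s unfolding y_def by auto
      show ?thesis
      proof (cases "a \<in> S")
        case True
        have "w a \<in> S" using F(5)[OF True] by simp
        then have "w a \<noteq> b" "w a \<noteq> s" using F(9) sS by auto
        then have "W a = w a" unfolding W_def by simp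
        then show ?thesis using True False \<open>a \<noteq> y\<close>
          unfolding Eset_def is_B_exc_def p by auto
      next
        case False
        then show ?thesis using \<open>\<not> (a = s \<or> a = b)\<close> \<open>a \<noteq> y\<close>
          unfolding Eset_def is_B_exc_def p by auto
      qed
    qed
  qed
  have fin: "finite (Eset p)" using Eset_sub[of p] F(8) p finite_subset by auto
  have ynot: "y \<notin> Eset p" using Eset_sub[of p] F(7) F(9) p unfolding y_def by auto
  show ?thesis unfolding exc_Eset twox E using fin ynot by simp
qed

lemma finT2: "finite T2"
  unfolding T2_def using finite_DerA[OF finA] DerA_facts(8)
  by (intro finite_SigmaI) (auto)

lemma sum_T2: "(\<Sum>x\<in>T2. monom 1 (exc_B (ins x))) =
   (\<Sum>p\<in>DerA A. of_nat (2 * exc_B p) * monom 1 (exc_B p) + of_nat (2 * (card A - exc_B p)) * monom (1::real) (exc_B p + 1))"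
proof -
  have "(\<Sum>x\<in>T2. monom 1 (exc_B (ins x))) =
        (\<Sum>x\<in>T2. monom (1::real) (exc_B (fst x) + (if fst (snd x) \<in> Eset (fst x) then 0 else 1)))"
  proof (rule sum.cong[OF refl])
    fix x assume x: "x \<in> T2"
    obtain p b s where "x = (p, (b, s))" by (cases x) auto
    then show "monom 1 (exc_B (ins x)) = monom (1::real) (exc_B (fst x) + (if fst (snd x) \<in> Eset (fst x) then 0 else 1))"
      using exc_ins[OF x] by simp
  qed
  also have "\<dots> = (\<Sum>p\<in>DerA A. \<Sum>y\<in>fst p \<times> {m, - m}. monom (1::real) (exc_B p + (if fst y \<in> Eset p then 0 else 1)))"
    unfolding T2_def
    by (subst sum.Sigma) (use finite_DerA[OF finA] in \<open>auto dest: DerA_facts(8) intro: finite_cartesian_product simp: split_def\<close>)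
  also have "\<dots> = (\<Sum>p\<in>DerA A. of_nat (2 * exc_B p) * monom 1 (exc_B p) + of_nat (2 * (card A - exc_B p)) * monom (1::real) (exc_B p + 1))"
  proof (rule sum.cong[OF refl])
    fix p assume p: "p \<in> DerA A"
    obtain S w where pS: "p = (S, w)" by (cases p)
    have fS: "finite (fst p)" using DerA_facts(8)[OF p[unfolded pS]] pS by simp
    have cS: "card (fst p) = card A" using card_spA[OF finA _, of p] posA p unfolding DerA_def by auto
    have mm: "m \<noteq> - m" using mpos by simp
    have "(\<Sum>y\<in>fst p \<times> {m, - m}. monom (1::real) (exc_B p + (if fst y \<in> Eset p then 0 else 1)))
        = (\<Sum>b\<in>fst p. \<Sum>s\<in>{m, - m}. monom (1::real) (exc_B p + (if b \<in> Eset p then 0 else 1)))"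
      by (subst sum.cartesian_product) (simp add: split_def)
    also have "\<dots> = (\<Sum>b\<in>fst p. 2 * monom (1::real) (exc_B p + (if b \<in> Eset p then 0 else 1)))"
      using mm by simp
    also have "\<dots> = 2 * (of_nat (card (Eset p)) * monom 1 (exc_B p) + of_nat (card (fst p) - card (Eset p)) * monom (1::real) (exc_B p + 1))"
      unfolding sum_distrib_left[symmetric] using sum_split_E[OF fS Eset_sub] by simp
    also have "\<dots> = of_nat (2 * exc_B p) * monom 1 (exc_B p) + of_nat (2 * (card A - exc_B p)) * monom (1::real) (exc_B p + 1)"
      unfolding cS exc_Eset by (simp add: distrib_left mult.assoc)
    finally show "(\<Sum>y\<in>fst p \<times> {m, - m}. monom (1::real) (exc_B p + (if fst y \<in> Eset p then 0 else 1))) =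
       of_nat (2 * exc_B p) * monom 1 (exc_B p) + of_nat (2 * (card A - exc_B p)) * monom (1::real) (exc_B p + 1)" .
  qed
  finally show ?thesis .
qed

lemma sum_T3: "(\<Sum>x\<in>T3. monom 1 (exc_B (two x))) = smult 2 ([:0,1:] * (\<Sum>b\<in>A. DA (A - {b})))"
proof -
  have "(\<Sum>x\<in>T3. monom 1 (exc_B (two x))) = (\<Sum>(b, y)\<in>T3. monom (1::real) (exc_B (fst y) + 1))"
  proof (rule sum.cong[OF refl])
    fix x assume x: "x \<in> T3"
    obtain b p s where "x = (b, (p, s))" by (cases x) auto
    then show "monom 1 (exc_B (two x)) = (case x of (b, y) \<Rightarrow> monom (1::real) (exc_B (fst y) + 1))"
      using exc_two[OF x] by simp
  qed
  also have "\<dots> = (\<Sum>b\<in>A. \<Sum>y\<in>DerA (A - {b}) \<times> {m, - m}. monom (1::real) (exc_B (fst y) + 1))"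
    unfolding T3_def
    by (subst sum.Sigma) (use finA finite_DerA[of "A - {_}"] in \<open>auto simp: split_def\<close>)
  also have "\<dots> = (\<Sum>b\<in>A. \<Sum>p\<in>DerA (A - {b}). 2 * monom (1::real) (exc_B p + 1))"
  proof (rule sum.cong[OF refl])
    fix b assume "b \<in> A"
    have mm: "m \<noteq> - m" using mpos by simp
    have "(\<Sum>y\<in>DerA (A - {b}) \<times> {m, - m}. monom (1::real) (exc_B (fst y) + 1))
          = (\<Sum>p\<in>DerA (A - {b}). \<Sum>s\<in>{m, - m}. monom (1::real) (exc_B p + 1))"
      by (subst sum.cartesian_product) (simp add: split_def)
    also have "\<dots> = (\<Sum>p\<in>DerA (A - {b}). 2 * monom (1::real) (exc_B p + 1))"
      using mm by simp
    finally show "(\<Sum>y\<in>DerA (A - {b}) \<times> {m, - m}. monom (1::real) (exc_B (fst y) + 1))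
          = (\<Sum>p\<in>DerA (A - {b}). 2 * monom (1::real) (exc_B p + 1))" .
  qed
  also have "\<dots> = smult 2 ([:0,1:] * (\<Sum>b\<in>A. DA (A - {b})))"
  proof -
    have e: "smult 2 ([:0,1:] * monom 1 k) = 2 * monom (1::real) (k + 1)" for k
      by (rule poly_ext_real') (simp add: poly_monom)
    show ?thesis unfolding DA_def sum_distrib_left smult_sum_r e ..
  qed
  finally show ?thesis .
qed

lemma DA_rec: "DA B = smult (2 * real (card A) + 1) ([:0,1:] * DA A) + [:0,2,-2:] * pderiv (DA A)
    + smult 2 ([:0,1:] * (\<Sum>b\<in>A. DA (A - {b})))"
proof -
  have finB: "finite (DerA B)" using finA finite_DerA[of B] by simp
  have part: "DerA B = P1 \<union> P2 \<union> P3" unfolding P1_def P2_def P3_def by auto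
  have fin1: "finite P1" "finite P2" "finite P3" using finB unfolding P1_def P2_def P3_def by auto
  have dis: "P1 \<inter> P2 = {}" "(P1 \<union> P2) \<inter> P3 = {}" unfolding P1_def P2_def P3_def by auto
  let ?f = "\<lambda>p. monom (1::real) (exc_B p)"
  have "DA B = sum ?f P1 + sum ?f P2 + sum ?f P3"
    unfolding DA_def part
    by (simp add: sum.union_disjoint fin1 dis finite_UnI)
  also have "sum ?f P2 = (\<Sum>x\<in>T2. monom 1 (exc_B (ins x)))"
    using sum.reindex_bij_betw[OF bij_P2, of ?f] by simp
  also have "sum ?f P3 = (\<Sum>x\<in>T3. monom 1 (exc_B (two x)))"
    using sum.reindex_bij_betw[OF bij_P3, of ?f] by simp
  also have "sum ?f P1 + (\<Sum>x\<in>T2. monom 1 (exc_B (ins x))) =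
     (\<Sum>p\<in>DerA A. smult (2 * real (card A) + 1) ([:0,1:] * monom 1 (exc_B p)) + [:0,2,-2:] * pderiv (monom 1 (exc_B p)))"
    unfolding sum_P1 sum_T2 sum.distrib[symmetric]
  proof (rule sum.cong[OF refl])
    fix p assume p: "p \<in> DerA A"
    have "exc_B p \<le> card A"
    proof -
      have "card (Eset p) \<le> card (fst p)"
        using Eset_sub[of p] card_mono spA_fin[OF finA, of p] p unfolding DerA_def by auto
      then show ?thesis using card_spA[OF finA _, of p] posA p unfolding DerA_def exc_Eset by auto
    qed
    from phi_eq[OF this]
    show "monom 1 (exc_B p + 1) + (of_nat (2 * exc_B p) * monom 1 (exc_B p) + of_nat (2 * (card A - exc_B p)) * monom 1 (exc_B p + 1)) =
       smult (2 * real (card A) + 1) ([:0,1:] * monom 1 (exc_B p)) + [:0,2,-2:] * pderiv (monom (1::real) (exc_B p))"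
      by (simp add: add.assoc)
  qed
  also have "\<dots> = smult (2 * real (card A) + 1) ([:0,1:] * DA A) + [:0,2,-2:] * pderiv (DA A)"
    unfolding DA_def sum.distrib sum_distrib_left smult_sum_r pderiv_sum' ..
  finally show ?thesis unfolding sum_T3 by (simp add: add.assoc)
qed
end


lemma DA_card: "finite A \<Longrightarrow> \<forall>a\<in>A. 0 < a \<Longrightarrow> DA A = g (card A)"
proof (induction "card A" arbitrary: A rule: less_induct)
  case less
  show ?case
  proof (cases "A = {}")
    case True then show ?thesis by (simp add: DA_empty)
  next
    case False
    define m where "m = Max A"
    define A' where "A' = A - {m}"
    have mA: "m \<in> A" unfolding m_def using Max_in[OF less(2) False] .
    have Aeq: "A = insert m A'" unfolding A'_def using mA by auto
    have finA': "finite A'" unfolding A'_def using less(2) by simp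
    have posA': "\<forall>a\<in>A'. 0 < a \<and> a < m"
    proof
      fix a assume a: "a \<in> A'"
      then have "a \<in> A" "a \<noteq> m" unfolding A'_def by auto
      then have "a \<le> m" unfolding m_def using Max_ge[OF less(2)] by auto
      then show "0 < a \<and> a < m" using less(3) \<open>a \<in> A\<close> \<open>a \<noteq> m\<close> by auto
    qed
    have mpos: "0 < m" using less(3) mA by auto
    have mA': "m \<notin> A'" unfolding A'_def by simp
    have cA: "card A = Suc (card A')" unfolding Aeq using finA' mA' by simp
    have rec: "DA A = smult (2 * real (card A') + 1) ([:0,1:] * DA A') + [:0,2,-2:] * pderiv (DA A')
        + smult 2 ([:0,1:] * (\<Sum>b\<in>A'. DA (A' - {b})))"
      unfolding Aeq using DA_rec[OF finA' posA' mpos] .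
    have IH1: "DA A' = g (card A')"
      using less(1)[of A'] cA finA' posA' by simp
    have IH2: "DA (A' - {b}) = g (card A' - 1)" if b: "b \<in> A'" for b
    proof -
      have "card (A' - {b}) = card A' - 1" using b finA' by simp
      moreover have "card (A' - {b}) < card A" using cA card_Diff1_le[of A' b] by simp
      ultimately show ?thesis using less(1)[of "A' - {b}"] finA' posA' by simp
    qed
    have S: "(\<Sum>b\<in>A'. DA (A' - {b})) = of_nat (card A') * g (card A' - 1)"
      using IH2 by simp
    show ?thesis
    proof (cases "card A'")
      case 0
      then show ?thesis unfolding rec IH1 S cA by (rule_tac poly_ext_real) simp
    next
      case (Suc j)
      show ?thesis unfolding rec IH1 S cA Suc
        by (rule poly_ext_real) (simp add: algebra_simps)
    qed
  qed
qed

lemma dB_eq_g: "dB n = g n"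
proof -
  have "DA {1..int n} = g (card {1..int n})" by (rule DA_card) auto
  then show ?thesis unfolding dB_DA by simp
qed


lemma zero_if_double_pal:
  fixes r :: "real poly"
  assumes "\<And>x. x \<noteq> 0 \<Longrightarrow> poly r x = x ^ n * poly r (1 / x)"
      and "\<And>x. x \<noteq> 0 \<Longrightarrow> poly r x = x ^ (n+1) * poly r (1 / x)"
  shows "r = 0"
proof -
  have z: "poly r y = 0" if "y \<noteq> 0" "y \<noteq> 1" for y
  proof -
    have x0: "1 / y \<noteq> 0" using that by simp
    have "(1/y) ^ n * poly r y = (1/y) ^ (n+1) * poly r y"
      using assms(1)[OF x0] assms(2)[OF x0] by simp
    then have "(1/y) ^ n * (1 - 1/y) * poly r y = 0" by (simp add: algebra_simps)
    moreover have "(1/y) ^ n \<noteq> 0" "1 - 1/y \<noteq> 0" using that by (auto simp: field_simps)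
    ultimately show ?thesis using that by auto
  qed
  have "infinite ({..<0::real})" by (rule infinite_Iio)
  moreover have "{..<0::real} \<subseteq> {y. poly r y = 0}" using z by auto
  ultimately have "infinite {y. poly r y = 0}" using finite_subset by blast
  then show ?thesis using poly_roots_finite by blast
qed

lemma fpm: "fplus_fminus n = FF n"
  unfolding fplus_fminus_def
proof (rule the_equality)
  have h: "palc n (fst (FF n))" "palc (n+1) (snd (FF n))" using FF_palc by auto
  show "case FF n of (p, q) \<Rightarrow> dB n = p + q \<and>
      (\<forall>x::real. x \<noteq> 0 \<longrightarrow> poly p x = x ^ n * poly p (1 / x)) \<and>
      (\<forall>x::real. x \<noteq> 0 \<longrightarrow> poly q x = x ^ (n + 1) * poly q (1 / x))"
  proof (cases "FF n")
    case (Pair a b)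
    then show ?thesis
      using palc_poly[OF h(1)] palc_poly[OF h(2)] FF_g[of n] dB_eq_g[of n]
      by (simp only: prod.case fst_conv snd_conv) blast
  qed
next
  fix pq assume a: "case pq of (p, q) \<Rightarrow> dB n = p + q \<and>
      (\<forall>x::real. x \<noteq> 0 \<longrightarrow> poly p x = x ^ n * poly p (1 / x)) \<and>
      (\<forall>x::real. x \<noteq> 0 \<longrightarrow> poly q x = x ^ (n + 1) * poly q (1 / x))"
  obtain p q where pq: "pq = (p, q)" by (cases pq)
  obtain a b where ab: "FF n = (a, b)" by (cases "FF n")
  have a': "dB n = p + q" "\<And>x. x \<noteq> 0 \<Longrightarrow> poly p x = x ^ n * poly p (1 / x)"
     "\<And>x. x \<noteq> 0 \<Longrightarrow> poly q x = x ^ (n + 1) * poly q (1 / x)"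
    using a unfolding pq by (simp only: prod.case; blast)+
  have h: "palc n a" "palc (n+1) b" using FF_palc[of n] ab by auto
  have s: "p + q = a + b" using a'(1) FF_g[of n] dB_eq_g[of n] ab by simp
  have "p - a = 0"
  proof (rule zero_if_double_pal)
    fix x :: real assume x: "x \<noteq> 0"
    have p1: "poly p x = x ^ n * poly p (1 / x)" using a'(2) x by blast
    show "poly (p - a) x = x ^ n * poly (p - a) (1 / x)"
      using p1 palc_poly[OF h(1) x] by (simp add: algebra_simps)
    have e: "p - a = b - q" using s by (simp add: algebra_simps)
    have q1: "poly q x = x ^ (n+1) * poly q (1 / x)" using a'(3) x by blast
    show "poly (p - a) x = x ^ (n+1) * poly (p - a) (1 / x)"
      unfolding e using q1 palc_poly[OF h(2) x] by (simp add: algebra_simps)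
  qed
  then show "pq = FF n" using pq ab s by auto
qed

theorem proposition7p8:
  fixes n :: nat
  assumes "n \<ge> 1"
  shows "fplus n =
           [:-1, 2 * real (n - 1):] * fplus (n - 1)
         + [:0, 2, -2:] * pderiv (fplus (n - 1))
         + (if n \<ge> 2 then [:0, 2 * real (n - 1):] * fplus (n - 2) else 0)
         + dB (n - 1)"
proof (cases n rule: FF.cases)
  case 1 then show ?thesis using assms by simp
next
  case 2
  have m: "[:-1:] + 1 = (0::real poly)" by (rule poly_ext_real) simp
  show ?thesis using 2 m by (simp add: fplus_def fpm dB_eq_g)
next
  case (3 k)
  have d: "dB (Suc k) = fst (FF (Suc k)) + snd (FF (Suc k))" by (simp add: FF_g dB_eq_g)
  show ?thesis unfolding 3 fplus_def fpm by (simp add: Let_def d)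
qed

end
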